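(* Let $G$ be a group generated by a set $X=\{x_1,\dots,x_n\}$ of cardinality $n$ with non-trivial center $Z=Z(G)$. Let $\bar G=G/Z$ with generating set $\bar X$ the image of $X$. Suppose the commutator width $\mathrm{cw}(G)=l$ and $\mathrm{pw}(\bar G,\bar X)=k$ (both finite). Then $$\mathrm{pw}(G,X)\le n+l(2k+\varepsilon),$$ where $\varepsilon=0$ if $k$ is even and $\varepsilon=1$ if $k$ is odd.
   Context: A palindrome in a group generated by a set $X$ is an element represented by a reduced word in $X^{\pm1}$ reading the same forwards and backwards; $l_{\mathcal P}(g)$ is the minimal number of palindromes whose product is $g$; $\mathrm{pw}(G,X)=\sup_{g\in G}l_{\mathcal P}(g)$. The commutator is $[g,h]=g^{-1}h^{-1}gh$; the commutator length of $g\in G'=[G,G]$ is the minimal number of commutators whose product is $g$, and $\mathrm{cw}(G)$ is the supremum of commutator lengths over $G'$. *)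

theory Defs
  imports "HOL-Algebra.Algebra" "HOL-Library.Extended_Nat"
begin

definition center :: "('a, 'b) monoid_scheme \<Rightarrow> 'a set" where
  "center G = {z \<in> carrier G. \<forall>g \<in> carrier G. z \<otimes>\<^bsub>G\<^esub> g = g \<otimes>\<^bsub>G\<^esub> z}"

text \<open>Words in S^{+-1}: a letter is (s, True) for s and (s, False) for s^{-1}.\<close>
definition word_over :: "'a set \<Rightarrow> ('a \<times> bool) list \<Rightarrow> bool" where
  "word_over S w \<longleftrightarrow> (\<forall>l \<in> set w. fst l \<in> S)"

definition reduced_word :: "('a \<times> bool) list \<Rightarrow> bool" where
  "reduced_word w \<longleftrightarrow> (\<forall>i. Suc i < length w \<longrightarrow>
      \<not> (fst (w ! i) = fst (w ! Suc i) \<and> snd (w ! i) \<noteq> snd (w ! Suc i)))"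

definition word_eval :: "('a, 'b) monoid_scheme \<Rightarrow> ('a \<times> bool) list \<Rightarrow> 'a" where
  "word_eval G w = foldr (\<lambda>l acc. (if snd l then fst l else inv\<^bsub>G\<^esub> (fst l)) \<otimes>\<^bsub>G\<^esub> acc) w \<one>\<^bsub>G\<^esub>"

definition palindromes :: "('a, 'b) monoid_scheme \<Rightarrow> 'a set \<Rightarrow> 'a set" where
  "palindromes G S = {word_eval G w | w. word_over S w \<and> reduced_word w \<and> rev w = w}"

definition list_prod :: "('a, 'b) monoid_scheme \<Rightarrow> 'a list \<Rightarrow> 'a" where
  "list_prod G xs = foldr (\<lambda>x acc. x \<otimes>\<^bsub>G\<^esub> acc) xs \<one>\<^bsub>G\<^esub>"

definition pal_length :: "('a, 'b) monoid_scheme \<Rightarrow> 'a set \<Rightarrow> 'a \<Rightarrow> nat" where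
  "pal_length G S g = (LEAST m. \<exists>ps. length ps = m \<and> set ps \<subseteq> palindromes G S \<and> list_prod G ps = g)"

definition pal_width :: "('a, 'b) monoid_scheme \<Rightarrow> 'a set \<Rightarrow> enat" where
  "pal_width G S = (SUP g \<in> carrier G. enat (pal_length G S g))"

definition commutator :: "('a, 'b) monoid_scheme \<Rightarrow> 'a \<Rightarrow> 'a \<Rightarrow> 'a" where
  "commutator G g h = inv\<^bsub>G\<^esub> g \<otimes>\<^bsub>G\<^esub> inv\<^bsub>G\<^esub> h \<otimes>\<^bsub>G\<^esub> g \<otimes>\<^bsub>G\<^esub> h"

definition comm_length :: "('a, 'b) monoid_scheme \<Rightarrow> 'a \<Rightarrow> nat" where
  "comm_length G g = (LEAST m. \<exists>ps. length ps = m \<and> set ps \<subseteq> carrier G \<times> carrier G \<and>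
      list_prod G (map (\<lambda>(a, b). commutator G a b) ps) = g)"

definition comm_width :: "('a, 'b) monoid_scheme \<Rightarrow> enat" where
  "comm_width G = (SUP g \<in> derived G (carrier G). enat (comm_length G g))"

end

theory Submission
  imports Defs
begin

definition flipw :: "('a \<times> bool) list \<Rightarrow> ('a \<times> bool) list" where
  "flipw w = map (\<lambda>l. (fst l, \<not> snd l)) (rev w)"

lemma word_eval_Nil[simp]: "word_eval G [] = \<one>\<^bsub>G\<^esub>"
  by (simp add: word_eval_def)

lemma word_eval_Cons[simp]: "word_eval G (l # w) =
   (if snd l then fst l else inv\<^bsub>G\<^esub> (fst l)) \<otimes>\<^bsub>G\<^esub> word_eval G w"
  by (simp add: word_eval_def)

lemma word_over_simps[simp]:
  "word_over S [] " "word_over S (l # w) \<longleftrightarrow> fst l \<in> S \<and> word_over S w"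
  "word_over S (v @ w) \<longleftrightarrow> word_over S v \<and> word_over S w"
  "word_over S (rev w) \<longleftrightarrow> word_over S w"
  "word_over S (flipw w) \<longleftrightarrow> word_over S w"
  by (auto simp: word_over_def flipw_def)

context group begin

lemma word_eval_closed: "S \<subseteq> carrier G \<Longrightarrow> word_over S w \<Longrightarrow> word_eval G w \<in> carrier G"
  by (induction w) auto

lemma word_eval_append: "S \<subseteq> carrier G \<Longrightarrow> word_over S v \<Longrightarrow> word_over S w \<Longrightarrow>
  word_eval G (v @ w) = word_eval G v \<otimes> word_eval G w"
  by (induction v) (auto simp: word_eval_closed m_assoc subset_iff)

lemma word_eval_flip: "S \<subseteq> carrier G \<Longrightarrow> word_over S w \<Longrightarrow>
  word_eval G (flipw w) = inv (word_eval G w)"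
proof (induction w)
  case Nil thus ?case by (simp add: flipw_def)
  next
  case (Cons l w)
  have fl: "flipw (l # w) = flipw w @ [(fst l, \<not> snd l)]" by (simp add: flipw_def)
  have "word_over S [(fst l, \<not> snd l)]" using Cons by auto
  hence "word_eval G (flipw (l # w)) = inv (word_eval G w) \<otimes> word_eval G [(fst l, \<not> snd l)]"
    using Cons by (simp add: fl word_eval_append)
  also have "\<dots> = inv (word_eval G (l # w))"
    using Cons by (auto simp: word_eval_closed inv_mult_group subset_iff)
  finally show ?case .
qed

lemma eval_cancel:
  assumes "fst x = fst y" "snd x \<noteq> snd y" "fst x \<in> carrier G"
  shows "word_eval G [x,y] = \<one>"
  using assms by (cases "snd x") auto

lemma pal_word:
  assumes S: "S \<subseteq> carrier G"
  shows "word_over S w \<Longrightarrow> rev w = w \<Longrightarrow> word_eval G w \<in> palindromes G S"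
proof (induction "length w" arbitrary: w rule: less_induct)
  case less
  note ov = less.prems(1) and rw = less.prems(2)
  have nth_rev: "w ! t = w ! (length w - Suc t)" if "t < length w" for t
    using rev_nth[OF that] rw by simp
  show ?case
  proof (cases "reduced_word w")
    case True thus ?thesis using less.prems unfolding palindromes_def by blast
  next
    case False
    then obtain i where i: "Suc i < length w" "fst (w!i) = fst (w!Suc i)" "snd (w!i) \<noteq> snd (w!Suc i)"
      unfolding reduced_word_def by blast
    define j where "j = length w - 2 - i"
    have j: "Suc j < length w" "fst (w!j) = fst (w!Suc j)" "snd (w!j) \<noteq> snd (w!Suc j)"
    proof -
      show "Suc j < length w" using i j_def by auto
      have "w ! j = w ! Suc i" using nth_rev[of j] i j_def by (simp add: Suc_diff_Suc numeral_2_eq_2)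
      moreover have "w ! Suc j = w ! i" using nth_rev[of "Suc j"] i j_def by (simp add: Suc_diff_Suc numeral_2_eq_2)
      ultimately show "fst (w!j) = fst (w!Suc j)" "snd (w!j) \<noteq> snd (w!Suc j)" using i by auto
    qed
    obtain a where a: "Suc a < length w" "fst (w!a) = fst (w!Suc a)" "snd (w!a) \<noteq> snd (w!Suc a)"
       "a + a + 2 \<le> length w"
    proof (cases "i \<le> j")
      case True thus ?thesis using that[OF i] i(1) j_def by auto
    next
      case False thus ?thesis using that[OF j] i(1) j_def by auto
    qed
    define A x y M where "A = take a w" "x = w ! a" "y = w ! Suc a" "M = drop (Suc (Suc a)) w"
    have w: "w = A @ [x, y] @ M"
      using a(1) unfolding A_x_y_M_def
      by (metis Cons_nth_drop_Suc Suc_lessD append_Cons append_Nil append_take_drop_id)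
    have lM: "length M = length w - a - 2" unfolding A_x_y_M_def by simp
    have ovA: "word_over S A" and ovM: "word_over S M" and xS: "fst x \<in> S"
      using ov by (subst (asm) w, simp)+
    have cxy: "word_eval G [x,y] = \<one>" using a A_x_y_M_def xS S eval_cancel by auto
    have ovxy: "word_over S [x,y]" using xS a A_x_y_M_def by simp
    have e1: "word_eval G ([x,y] @ M) = word_eval G [x,y] \<otimes> word_eval G M"
      by (rule word_eval_append[OF S ovxy ovM])
    have e2: "word_eval G (A @ ([x,y] @ M)) = word_eval G A \<otimes> word_eval G ([x,y] @ M)"
      by (rule word_eval_append[OF S ovA]) (use ovxy ovM in simp)
    have "word_eval G w = word_eval G A \<otimes> (\<one> \<otimes> word_eval G M)"
      by (subst w, simp only: e2 e1 cxy)
    hence ew: "word_eval G w = word_eval G A \<otimes> word_eval G M"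
      by (simp add: word_eval_closed[OF S ovM])
    consider "length M = a" | "length M = Suc a" | "length M \<ge> Suc (Suc a)" using lM a by linarith
    then show ?thesis
    proof cases
      case 1
      hence "length w = Suc a + Suc a" using lM a by linarith
      hence "w ! Suc a = w ! a" using nth_rev[of "Suc a"] a by simp
      thus ?thesis using a by simp
    next
      case 2
      hence lw: "length w = a + a + 3" using lM a by linarith
      have "M = drop (Suc (Suc a)) (rev w)" using rw A_x_y_M_def by simp
      also have "\<dots> = rev (take (Suc a) w)" using lw by (simp add: drop_rev)
      also have "\<dots> = x # rev A" using a unfolding A_x_y_M_def by (simp add: take_Suc_conv_app_nth)
      finally have M: "M = x # rev A" .
      have "word_eval G (A @ M) \<in> palindromes G S"
        using less(1)[of "A @ M"] ovA ovM lw M by (simp add: A_x_y_M_def)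
      thus ?thesis using ew ovA ovM S by (simp add: word_eval_append)
    next
      case 3
      define M0 where "M0 = take (length M - Suc (Suc a)) M"
      have "drop (length M - Suc (Suc a)) M = drop (length w - Suc (Suc a)) w"
      proof -
        have "length M - Suc (Suc a) + Suc (Suc a) = length w - Suc (Suc a)" using lM 3 a by linarith
        thus ?thesis unfolding A_x_y_M_def drop_drop by (simp only: A_x_y_M_def[symmetric])
      qed
      also have "\<dots> = drop (length w - Suc (Suc a)) (rev w)" using rw by simp
      also have "\<dots> = rev (take (Suc (Suc a)) w)" using a by (simp add: drop_rev)
      also have "take (Suc (Suc a)) w = A @ [x, y]" using a(1) by (subst w, simp add: A_x_y_M_def min_def)
      finally have "drop (length M - Suc (Suc a)) M = [y, x] @ rev A" by simp
      hence M: "M = M0 @ [y, x] @ rev A" unfolding M0_def by (metis append_take_drop_id)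
      have "rev w = A @ [x, y] @ rev M0 @ [y, x] @ rev A" by (subst w, simp add: M)
      hence rM0: "rev M0 = M0" using rw by (subst (asm) w, simp add: M)
      have ovM0: "word_over S M0" and ovrA: "word_over S (rev A)" using ovM M by auto
      have cyx: "word_eval G [y,x] = \<one>" using a A_x_y_M_def xS S eval_cancel by auto
      have ovyx: "word_over S [y,x]" using xS a A_x_y_M_def by simp
      have e3: "word_eval G ([y,x] @ rev A) = word_eval G [y,x] \<otimes> word_eval G (rev A)"
        by (rule word_eval_append[OF S ovyx ovrA])
      have e4: "word_eval G (M0 @ ([y,x] @ rev A)) = word_eval G M0 \<otimes> word_eval G ([y,x] @ rev A)"
        by (rule word_eval_append[OF S ovM0]) (use ovyx ovrA in simp)
      have "word_eval G M = word_eval G M0 \<otimes> (\<one> \<otimes> word_eval G (rev A))"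
        by (subst M, simp only: e4 e3 cyx)
      hence eM: "word_eval G M = word_eval G M0 \<otimes> word_eval G (rev A)"
        by (simp add: word_eval_closed[OF S ovrA])
      have "length (A @ M0 @ rev A) < length w" using w M by simp
      hence "word_eval G (A @ M0 @ rev A) \<in> palindromes G S"
        using less(1)[of "A @ M0 @ rev A"] ovA ovM0 rM0 by simp
      thus ?thesis using ew eM ovA ovM0 S
        by (simp add: word_eval_append word_eval_closed m_assoc)
    qed
  qed
qed


end

context group begin
lemma inv_cancel_left[simp]: "x \<in> carrier G \<Longrightarrow> y \<in> carrier G \<Longrightarrow> inv x \<otimes> (x \<otimes> y) = y"
  by (simp add: m_assoc[symmetric])
lemma inv_cancel_left2[simp]: "x \<in> carrier G \<Longrightarrow> y \<in> carrier G \<Longrightarrow> x \<otimes> (inv x \<otimes> y) = y"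
  by (simp add: m_assoc[symmetric])

lemma list_prod_Nil[simp]: "list_prod G [] = \<one>" by (simp add: list_prod_def)
lemma list_prod_Cons[simp]: "list_prod G (x # xs) = x \<otimes> list_prod G xs" by (simp add: list_prod_def)
lemma list_prod_closed: "set xs \<subseteq> carrier G \<Longrightarrow> list_prod G xs \<in> carrier G"
  by (induction xs) auto
lemma list_prod_append: "set xs \<subseteq> carrier G \<Longrightarrow> set ys \<subseteq> carrier G \<Longrightarrow>
  list_prod G (xs @ ys) = list_prod G xs \<otimes> list_prod G ys"
  by (induction xs) (auto simp: m_assoc list_prod_closed)
lemma list_prod_inv: "set xs \<subseteq> carrier G \<Longrightarrow> inv (list_prod G xs) = list_prod G (map (\<lambda>x. inv x) (rev xs))"
proof (induction xs)
  case (Cons a xs)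
  have "set (map (\<lambda>x. inv x) (rev xs)) \<subseteq> carrier G" using Cons by auto
  hence "list_prod G (map (\<lambda>x. inv x) (rev xs) @ [inv a]) = list_prod G (map (\<lambda>x. inv x) (rev xs)) \<otimes> inv a"
    using Cons by (subst list_prod_append) auto
  thus ?case using Cons by (simp add: list_prod_closed inv_mult_group)
qed simp

lemma pal_carrier: "S \<subseteq> carrier G \<Longrightarrow> palindromes G S \<subseteq> carrier G"
  unfolding palindromes_def using word_eval_closed by blast

lemma pal_one: "S \<subseteq> carrier G \<Longrightarrow> \<one> \<in> palindromes G S"
  using pal_word[of S "[]"] by simp

lemma rev_flipw: "rev (flipw w) = flipw (rev w)"
  by (simp add: flipw_def rev_map)

lemma pal_wordE: assumes "p \<in> palindromes G S"
  obtains w where "word_over S w" "rev w = w" "p = word_eval G w"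
  using assms unfolding palindromes_def by blast

lemma pal_inv: assumes S: "S \<subseteq> carrier G" and p: "p \<in> palindromes G S"
  shows "inv p \<in> palindromes G S"
proof -
  obtain w where w: "word_over S w" "rev w = w" "p = word_eval G w" using p by (rule pal_wordE)
  have "word_eval G (flipw w) \<in> palindromes G S"
    by (rule pal_word[OF S]) (use w in \<open>simp_all add: rev_flipw\<close>)
  thus ?thesis using word_eval_flip[OF S w(1)] w(3) by simp
qed

lemma eval_rep_True: "x \<in> carrier G \<Longrightarrow> word_eval G (replicate m (x, True)) = x [^] m"
proof (induction m)
  case (Suc m)
  have "word_eval G (replicate (Suc m) (x, True)) = x \<otimes> x [^] m" using Suc by simp
  also have "\<dots> = x [^] Suc m" by (rule nat_pow_Suc2[symmetric, OF Suc.prems])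
  finally show ?case .
qed simp

lemma pal_pow: assumes S: "S \<subseteq> carrier G" and x: "x \<in> S"
  shows "x [^] (i::int) \<in> palindromes G S"
proof -
  have xc: "x \<in> carrier G" using S x by auto
  define w where "w = replicate (nat \<bar>i\<bar>) (x, 0 \<le> i)"
  have "word_eval G w \<in> palindromes G S"
    by (rule pal_word[OF S]) (use x in \<open>auto simp: w_def word_over_def\<close>)
  moreover have "word_eval G w = x [^] i"
  proof (cases "0 \<le> i")
    case True
    have "x [^] i = x [^] (int (nat i))" using True by simp
    also have "\<dots> = x [^] (nat i)" by (rule int_pow_int)
    finally show ?thesis using True xc by (simp add: w_def eval_rep_True)
  next
    case False
    have ixc: "inv x \<in> carrier G" using xc by simp
    have "word_eval G (replicate m (x, False)) = inv x [^] m" for m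
    proof (induction m)
      case (Suc m)
      have "word_eval G (replicate (Suc m) (x, False)) = inv x \<otimes> inv x [^] m" using Suc by simp
      also have "\<dots> = inv x [^] Suc m" by (rule nat_pow_Suc2[symmetric, OF ixc])
      finally show ?case .
    qed simp
    hence "word_eval G w = inv x [^] nat (- i)" using False by (simp add: w_def)
    also have "\<dots> = inv (x [^] nat (- i))" by (rule nat_pow_inv[OF xc])
    also have "\<dots> = x [^] (- int (nat (- i)))" by (rule int_pow_neg_int[OF xc, symmetric])
    also have "- int (nat (- i)) = i" using False by simp
    finally show ?thesis .
  qed
  ultimately show ?thesis by simp
qed

lemma conj_pal:
  assumes S: "S \<subseteq> carrier G" and v: "word_over S v"
  shows "set ps \<subseteq> palindromes G S \<Longrightarrow> \<exists>qs. set qs \<subseteq> palindromes G S \<and>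
      length qs = length ps + (if odd (length ps) then 1 else 0) \<and>
      list_prod G qs = inv (word_eval G v) \<otimes> list_prod G ps \<otimes> word_eval G v"
proof -
  define u where "u = word_eval G v"
  define r where "r = word_eval G (rev v)"
  have uc: "u \<in> carrier G" and rc: "r \<in> carrier G" using v S by (auto simp: u_def r_def word_eval_closed)
  have PC: "palindromes G S \<subseteq> carrier G" using pal_carrier[OF S] .
  have vr: "word_over S (rev v)" using v by simp
  have fu: "word_eval G (flipw v) = inv u" using word_eval_flip[OF S v] u_def by simp
  have fr: "word_eval G (flipw (rev v)) = inv r" using word_eval_flip[OF S vr] r_def by simp
  have ovf: "word_over S (flipw v)" "word_over S (flipw (rev v))" using v by simp_all
  have A: "inv u \<otimes> (p \<otimes> inv r) \<in> palindromes G S" if p: "p \<in> palindromes G S" for p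
  proof -
    obtain w where w: "word_over S w" "rev w = w" "p = word_eval G w" using p by (rule pal_wordE)
    have ow: "word_over S (w @ flipw (rev v))" using w(1) ovf by simp
    have "word_eval G (flipw v @ (w @ flipw (rev v))) \<in> palindromes G S"
      by (rule pal_word[OF S]) (use w v in \<open>simp_all add: rev_flipw\<close>)
    moreover have "word_eval G (flipw v @ (w @ flipw (rev v))) = inv u \<otimes> (p \<otimes> inv r)"
      using word_eval_append[OF S ovf(1) ow] word_eval_append[OF S w(1) ovf(2)] fu fr w(3) by simp
    ultimately show ?thesis by simp
  qed
  have B: "r \<otimes> (p \<otimes> u) \<in> palindromes G S" if p: "p \<in> palindromes G S" for p
  proof -
    obtain w where w: "word_over S w" "rev w = w" "p = word_eval G w" using p by (rule pal_wordE)
    have ow: "word_over S (w @ v)" using w(1) v by simp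
    have "word_eval G (rev v @ (w @ v)) \<in> palindromes G S"
      by (rule pal_word[OF S]) (use w v in \<open>simp_all\<close>)
    moreover have "word_eval G (rev v @ (w @ v)) = r \<otimes> (p \<otimes> u)"
      using word_eval_append[OF S vr ow] word_eval_append[OF S w(1) v] w(3) u_def r_def by simp
    ultimately show ?thesis by simp
  qed
  have C: "r \<otimes> u \<in> palindromes G S"
  proof -
    have "word_eval G (rev v @ v) \<in> palindromes G S"
      by (rule pal_word[OF S]) (use v in \<open>simp_all\<close>)
    moreover have "word_eval G (rev v @ v) = r \<otimes> u"
      using word_eval_append[OF S vr v] u_def r_def by simp
    ultimately show ?thesis by simp
  qed
  show "set ps \<subseteq> palindromes G S \<Longrightarrow> ?thesis"
    unfolding u_def[symmetric]
  proof (induction ps rule: induct_list012)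
    case 1 thus ?case using uc by (intro exI[of _ "[]"]) simp
  next
    case (2 p)
    have pc: "p \<in> carrier G" using 2 PC by auto
    show ?case
    proof (intro exI conjI)
      show "set [inv u \<otimes> (p \<otimes> inv r), r \<otimes> u] \<subseteq> palindromes G S" using A[of p] C 2 by simp
      show "length [inv u \<otimes> (p \<otimes> inv r), r \<otimes> u] = length [p] + (if odd (length [p]) then 1 else 0)" by simp
      show "list_prod G [inv u \<otimes> (p \<otimes> inv r), r \<otimes> u] = inv u \<otimes> list_prod G [p] \<otimes> u"
        using pc uc rc by (simp add: m_assoc)
    qed
  next
    case (3 p1 p2 zs)
    then obtain qs where qs: "set qs \<subseteq> palindromes G S"
      "length qs = length zs + (if odd (length zs) then 1 else 0)"
      "list_prod G qs = inv u \<otimes> list_prod G zs \<otimes> u" by auto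
    have pc: "p1 \<in> carrier G" "p2 \<in> carrier G" "set zs \<subseteq> carrier G" using 3 PC by auto
    have zc: "list_prod G zs \<in> carrier G" using pc list_prod_closed by auto
    show ?case
    proof (intro exI conjI)
      show "set (inv u \<otimes> (p1 \<otimes> inv r) # r \<otimes> (p2 \<otimes> u) # qs) \<subseteq> palindromes G S"
        using A[of p1] B[of p2] 3(3) qs(1) by simp
      show "length (inv u \<otimes> (p1 \<otimes> inv r) # r \<otimes> (p2 \<otimes> u) # qs) =
        length (p1 # p2 # zs) + (if odd (length (p1 # p2 # zs)) then 1 else 0)" using qs(2) by simp
      show "list_prod G (inv u \<otimes> (p1 \<otimes> inv r) # r \<otimes> (p2 \<otimes> u) # qs) =
        inv u \<otimes> list_prod G (p1 # p2 # zs) \<otimes> u"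
        using pc uc rc zc qs(3) by (simp add: m_assoc)
    qed
  qed
qed

lemma comm_central:
  assumes "x \<in> carrier G" "b \<in> carrier G" "z \<in> center G"
  shows "commutator G (x \<otimes> z) b = commutator G x b"
proof -
  have zc: "z \<in> carrier G" and zb: "z \<otimes> b = b \<otimes> z" and zc2: "\<And>g. g \<in> carrier G \<Longrightarrow> z \<otimes> g = g \<otimes> z"
    using assms by (auto simp: center_def)
  define C where "C = inv x \<otimes> (inv b \<otimes> (x \<otimes> b))"
  have Cc: "C \<in> carrier G" using assms zc by (simp add: C_def)
  have "commutator G (x \<otimes> z) b = inv z \<otimes> (inv x \<otimes> (inv b \<otimes> (x \<otimes> (z \<otimes> b))))"
    using assms zc by (simp add: commutator_def inv_mult_group m_assoc)
  also have "\<dots> = inv z \<otimes> (inv x \<otimes> (inv b \<otimes> (x \<otimes> (b \<otimes> z))))" by (simp only: zb)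
  also have "\<dots> = inv z \<otimes> (C \<otimes> z)"
    using assms zc by (simp add: C_def m_assoc)
  also have "\<dots> = inv z \<otimes> (z \<otimes> C)" using zc2[OF Cc] by simp
  also have "\<dots> = C" using Cc zc by simp
  finally show ?thesis using assms by (simp add: C_def commutator_def m_assoc)
qed

end


lemma list_prod_Cons_gen[simp]: "list_prod H (x # xs) = x \<otimes>\<^bsub>H\<^esub> list_prod H xs"
  by (simp add: list_prod_def)
lemma list_prod_Nil_gen[simp]: "list_prod H [] = \<one>\<^bsub>H\<^esub>"
  by (simp add: list_prod_def)

lemma word_eval_hom:
  assumes h: "group_hom G H h" and S: "S \<subseteq> carrier G"
  shows "word_over S v \<Longrightarrow> h (word_eval G v) = word_eval H (map (\<lambda>l. (h (fst l), snd l)) v)"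
proof (induction v)
  case Nil thus ?case using h by (simp add: group_hom.hom_one)
next
  case (Cons l v)
  interpret group_hom G H h by fact
  have lc: "fst l \<in> carrier G" using Cons S by auto
  have vc: "word_eval G v \<in> carrier G" using Cons S by (auto intro: G.word_eval_closed)
  show ?case using Cons lc vc by (simp add: hom_inv)
qed

lemma word_eval_singles:
  assumes "group H"
  shows "word_over (carrier H) W \<Longrightarrow> word_eval H W = list_prod H (map (\<lambda>l. word_eval H [l]) W)"
proof (induction W)
  case (Cons l W) thus ?case using assms by (simp add: group.inv_closed monoid.r_one group.is_monoid)
qed simp

lemma lift_word:
  fixes h :: "'a \<Rightarrow> 'b"
  assumes "word_over (h ` S) W"
  shows "\<exists>w. word_over S w \<and> map (\<lambda>l. (h (fst l), snd l)) w = W \<and> (rev W = W \<longrightarrow> rev w = w)"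
proof -
  define g where "g = (\<lambda>l :: 'b \<times> bool. ((SOME x. x \<in> S \<and> h x = fst l), snd l))"
  have g: "fst (g l) \<in> S \<and> h (fst (g l)) = fst l" if "l \<in> set W" for l
  proof -
    have "\<exists>x. x \<in> S \<and> h x = fst l" using assms that unfolding word_over_def by force
    thus ?thesis unfolding g_def by (simp, rule someI_ex)
  qed
  show ?thesis
  proof (intro exI conjI impI)
    show "word_over S (map g W)" using g by (auto simp: word_over_def)
    show "map (\<lambda>l. (h (fst l), snd l)) (map g W) = W"
      using g by (induction W) (auto simp: g_def)
    show "rev (map g W) = map g W" if "rev W = W" using that by (metis rev_map)
  qed
qed

lemma lift_pal:
  assumes h: "group_hom G H h" and S: "S \<subseteq> carrier G" and P: "P \<in> palindromes H (h ` S)"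
  shows "\<exists>p \<in> palindromes G S. h p = P"
proof -
  interpret group_hom G H h by fact
  obtain W where W: "word_over (h ` S) W" "rev W = W" "P = word_eval H W"
    using P unfolding palindromes_def by blast
  obtain w where w: "word_over S w" "map (\<lambda>l. (h (fst l), snd l)) w = W" "rev w = w"
    using lift_word[OF W(1)] W(2) by blast
  have "word_eval G w \<in> palindromes G S" using G.pal_word[OF S w(1,3)] .
  moreover have "h (word_eval G w) = P" using word_eval_hom[OF h S w(1)] w(2) W(3) by simp
  ultimately show ?thesis by blast
qed

lemma lift_pal_list:
  assumes h: "group_hom G H h" and S: "S \<subseteq> carrier G"
  shows "set Ps \<subseteq> palindromes H (h ` S) \<Longrightarrow>
    \<exists>ps. length ps = length Ps \<and> set ps \<subseteq> palindromes G S \<and> h (list_prod G ps) = list_prod H Ps"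
proof (induction Ps)
  case Nil
  interpret group_hom G H h by fact
  show ?case by (intro exI[of _ "[]"]) simp
next
  case (Cons P Ps)
  interpret group_hom G H h by fact
  obtain ps where ps: "length ps = length Ps" "set ps \<subseteq> palindromes G S" "h (list_prod G ps) = list_prod H Ps"
    using Cons by auto
  obtain p where p: "p \<in> palindromes G S" "h p = P" using lift_pal[OF h S] Cons by auto
  have pc: "p \<in> carrier G" "list_prod G ps \<in> carrier G"
    using G.pal_carrier[OF S] p ps by (auto intro!: G.list_prod_closed)
  show ?case
    by (intro exI[of _ "p # ps"]) (use ps p pc in simp)
qed

context group begin

lemma gen_word: assumes S: "S \<subseteq> carrier G" shows "g \<in> generate G S \<Longrightarrow> \<exists>v. word_over S v \<and> word_eval G v = g"
proof (induction rule: generate.induct)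
  case one thus ?case by (intro exI[of _ "[]"]) simp
next
  case (incl h) thus ?case using S by (intro exI[of _ "[(h, True)]"]) auto
next
  case (inv h) thus ?case using S by (intro exI[of _ "[(h, False)]"]) auto
next
  case (eng h1 h2)
  then obtain v1 v2 where "word_over S v1" "word_eval G v1 = h1" "word_over S v2" "word_eval G v2 = h2" by auto
  thus ?case using eng S by (intro exI[of _ "v1 @ v2"]) (simp add: word_eval_append)
qed

lemma comm_closed: "a \<in> carrier G \<Longrightarrow> b \<in> carrier G \<Longrightarrow> commutator G a b \<in> carrier G"
  by (simp add: commutator_def)

lemma derived_comms:
  assumes "c \<in> derived G (carrier G)"
  shows "\<exists>cs. set cs \<subseteq> carrier G \<times> carrier G \<and>
     list_prod G (map (\<lambda>(a, b). commutator G a b) cs) = c"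
  using assms unfolding derived_def
proof (induction rule: generate.induct)
  case one thus ?case by (intro exI[of _ "[]"]) simp
next
  case (incl h)
  then obtain h1 h2 where h: "h1 \<in> carrier G" "h2 \<in> carrier G" "h = h1 \<otimes> h2 \<otimes> inv h1 \<otimes> inv h2" by auto
  thus ?case by (intro exI[of _ "[(inv h1, inv h2)]"]) (simp add: commutator_def)
next
  case (inv h)
  then obtain h1 h2 where h: "h1 \<in> carrier G" "h2 \<in> carrier G" "h = h1 \<otimes> h2 \<otimes> inv h1 \<otimes> inv h2" by auto
  thus ?case by (intro exI[of _ "[(inv h2, inv h1)]"]) (simp add: commutator_def inv_mult_group m_assoc)
next
  case (eng h1 h2)
  then obtain c1 c2 where c: "set c1 \<subseteq> carrier G \<times> carrier G" "list_prod G (map (\<lambda>(a, b). commutator G a b) c1) = h1"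
     "set c2 \<subseteq> carrier G \<times> carrier G" "list_prod G (map (\<lambda>(a, b). commutator G a b) c2) = h2" by auto
  have "set (map (\<lambda>(a, b). commutator G a b) c1) \<subseteq> carrier G"
       "set (map (\<lambda>(a, b). commutator G a b) c2) \<subseteq> carrier G" using c comm_closed by auto
  thus ?case using c by (intro exI[of _ "c1 @ c2"]) (simp add: list_prod_append)
qed

lemma center_normal: "center G \<lhd> G"
proof (rule normal_invI)
  show "subgroup (center G) G"
  proof (rule subgroupI)
    show "center G \<subseteq> carrier G" "center G \<noteq> {}" unfolding center_def by auto
    show "a \<otimes> b \<in> center G" if "a \<in> center G" "b \<in> center G" for a b
    proof -
      have ac: "a \<in> carrier G" and ca: "\<And>g. g \<in> carrier G \<Longrightarrow> a \<otimes> g = g \<otimes> a"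
       and bc: "b \<in> carrier G" and cb: "\<And>g. g \<in> carrier G \<Longrightarrow> b \<otimes> g = g \<otimes> b"
        using that unfolding center_def by auto
      have "a \<otimes> b \<otimes> g = g \<otimes> (a \<otimes> b)" if g: "g \<in> carrier G" for g
      proof -
        have "a \<otimes> b \<otimes> g = a \<otimes> (b \<otimes> g)" using ac bc g by (rule m_assoc)
        also have "\<dots> = a \<otimes> (g \<otimes> b)" using cb[OF g] by simp
        also have "\<dots> = (a \<otimes> g) \<otimes> b" using ac bc g by (simp add: m_assoc)
        also have "\<dots> = (g \<otimes> a) \<otimes> b" using ca[OF g] by simp
        also have "\<dots> = g \<otimes> (a \<otimes> b)" using ac bc g by (simp add: m_assoc)
        finally show ?thesis .
      qed
      thus ?thesis using ac bc unfolding center_def by auto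
    qed
    show "inv a \<in> center G" if a: "a \<in> center G" for a
    proof -
      have ac: "a \<in> carrier G" and com: "\<And>g. g \<in> carrier G \<Longrightarrow> a \<otimes> g = g \<otimes> a"
        using a by (auto simp: center_def)
      have "inv a \<otimes> g = g \<otimes> inv a" if g: "g \<in> carrier G" for g
      proof -
        have "inv a \<otimes> g = inv a \<otimes> (g \<otimes> a) \<otimes> inv a" using ac g by (simp add: m_assoc)
        also have "\<dots> = inv a \<otimes> (a \<otimes> g) \<otimes> inv a" using com g by simp
        also have "\<dots> = g \<otimes> inv a" using ac g by simp
        finally show ?thesis .
      qed
      thus ?thesis using ac by (auto simp: center_def)
    qed
  qed
  show "x \<otimes> h \<otimes> inv x \<in> center G" if "x \<in> carrier G" "h \<in> center G" for x h
  proof -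
    have hc: "h \<in> carrier G" using that unfolding center_def by auto
    have "x \<otimes> h = h \<otimes> x" using that unfolding center_def by auto
    hence "x \<otimes> h \<otimes> inv x = h \<otimes> x \<otimes> inv x" by simp
    also have "\<dots> = h" using hc that(1) by (simp add: m_assoc)
    finally show ?thesis using that(2) by simp
  qed
qed

end


context group begin

lemma list_prod_ones: "list_prod G (replicate m \<one>) = \<one>"
  by (induction m) auto

lemma concat_pals:
  assumes P: "P \<subseteq> carrier G"
  shows "\<forall>c \<in> set cs. \<exists>qs. length qs = N \<and> set qs \<subseteq> P \<and> list_prod G qs = c \<Longrightarrow>
    \<exists>qs. length qs = N * length cs \<and> set qs \<subseteq> P \<and> list_prod G qs = list_prod G cs"
proof (induction cs)
  case Nil thus ?case by (intro exI[of _ "[]"]) simp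
next
  case (Cons c cs)
  then obtain q1 q2 where q: "length q1 = N" "set q1 \<subseteq> P" "list_prod G q1 = c"
     "length q2 = N * length cs" "set q2 \<subseteq> P" "list_prod G q2 = list_prod G cs" by force
  show ?case
    by (intro exI[of _ "q1 @ q2"]) (use q P in \<open>auto simp: list_prod_append\<close>)
qed

lemma comm_pal:
  assumes S: "S \<subseteq> carrier G" and gen: "generate G S = carrier G"
    and pw: "pal_width (G Mod (center G)) ((\<lambda>x. center G #> x) ` S) = enat k"
    and a: "a \<in> carrier G" and b: "b \<in> carrier G"
  shows "\<exists>qs. length qs = k + k + (if odd k then 1 else 0) \<and> set qs \<subseteq> palindromes G S \<and>
     list_prod G qs = commutator G a b"
proof -
  define Z where "Z = center G"
  interpret N: normal Z G using center_normal Z_def by simp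
  define Q where "Q = G Mod Z"
  define T where "T = (\<lambda>x. Z #> x) ` S"
  have hom: "group_hom G Q (\<lambda>x. Z #> x)"
    unfolding group_hom_def group_hom_axioms_def Q_def
    using is_group N.factorgroup_is_group N.r_coset_hom_Mod by auto
  interpret hh: group_hom G Q "\<lambda>x. Z #> x" by (rule hom)
  have pw': "pal_width Q T = enat k" using pw unfolding Q_def T_def Z_def .
  obtain va where va: "word_over S va" "word_eval G va = a"
    using gen_word[OF S] a gen by blast
  define W where "W = map (\<lambda>l. (Z #> fst l, snd l)) va"
  have haW: "Z #> a = word_eval Q W"
    using word_eval_hom[OF hom S va(1)] va(2) W_def by simp
  have WT: "word_over T W" using va(1) unfolding W_def T_def word_over_def by auto
  have TQ: "T \<subseteq> carrier Q" unfolding T_def using S hh.hom_closed by auto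
  have WQ: "word_over (carrier Q) W" using WT TQ unfolding word_over_def by auto
  have single: "word_eval Q [l] \<in> palindromes Q T" if "l \<in> set W" for l
    unfolding palindromes_def using WT that
    by (auto simp: word_over_def reduced_word_def intro!: exI[of _ "[l]"])
  have ex: "\<exists>Ps. length Ps = length W \<and> set Ps \<subseteq> palindromes Q T \<and> list_prod Q Ps = Z #> a"
    using single haW word_eval_singles[OF hh.H.is_group WQ]
    by (intro exI[of _ "map (\<lambda>l. word_eval Q [l]) W"]) auto
  obtain Ps where Ps: "length Ps = pal_length Q T (Z #> a)" "set Ps \<subseteq> palindromes Q T"
    "list_prod Q Ps = Z #> a"
    using LeastI_ex[of "\<lambda>m. \<exists>ps. length ps = m \<and> set ps \<subseteq> palindromes Q T \<and> list_prod Q ps = Z #> a"] ex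
    unfolding pal_length_def by blast
  have "enat (pal_length Q T (Z #> a)) \<le> pal_width Q T"
    unfolding pal_width_def by (rule SUP_upper) (use a hh.hom_closed in auto)
  hence Pk: "length Ps \<le> k" using pw' Ps(1) by simp
  obtain ps where ps: "length ps = length Ps" "set ps \<subseteq> palindromes G S" "Z #> list_prod G ps = list_prod Q Ps"
    using lift_pal_list[OF hom S] Ps(2) unfolding T_def by blast
  have PC: "palindromes G S \<subseteq> carrier G" by (rule pal_carrier[OF S])
  define ps' where "ps' = ps @ replicate (k - length ps) \<one>"
  have ps'1: "length ps' = k" using Pk ps(1) by (simp add: ps'_def)
  have ps'2: "set ps' \<subseteq> palindromes G S" using ps(2) pal_one[OF S] by (auto simp: ps'_def)
  have psc: "set ps \<subseteq> carrier G" using ps(2) PC by auto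
  have ps'3: "list_prod G ps' = list_prod G ps"
    using psc unfolding ps'_def by (subst list_prod_append) (auto simp: list_prod_ones list_prod_closed)
  define x where "x = list_prod G ps'"
  have xc: "x \<in> carrier G" using ps'2 PC by (auto simp: x_def intro!: list_prod_closed)
  have "Z #> x = Z #> a" using ps ps'3 Ps(3) by (simp add: x_def)
  moreover have "a \<in> Z #> a" using rcos_self[OF a N.subgroup_axioms] .
  ultimately have "a \<in> Z #> x" by simp
  then obtain z where z: "z \<in> Z" "a = z \<otimes> x" unfolding r_coset_def by auto
  have "z \<otimes> x = x \<otimes> z" using z xc unfolding Z_def center_def by auto
  hence ca: "commutator G a b = commutator G x b" using comm_central[OF xc b] z Z_def by simp
  obtain vb where vb: "word_over S vb" "word_eval G vb = b"
    using gen_word[OF S] b gen by blast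
  obtain qs where qs: "set qs \<subseteq> palindromes G S"
      "length qs = length ps' + (if odd (length ps') then 1 else 0)"
      "list_prod G qs = inv (word_eval G vb) \<otimes> list_prod G ps' \<otimes> word_eval G vb"
    using conj_pal[OF S vb(1) ps'2] by blast
  have ps'c: "set ps' \<subseteq> carrier G" using ps'2 PC by auto
  have invs: "set (map (\<lambda>x. inv x) (rev ps')) \<subseteq> palindromes G S" using ps'2 pal_inv[OF S] by auto
  have qsc: "set qs \<subseteq> carrier G" using qs PC by auto
  show ?thesis
  proof (intro exI conjI)
    show "length (map (\<lambda>x. inv x) (rev ps') @ qs) = k + k + (if odd k then 1 else 0)"
      using qs ps'1 by simp
    show "set (map (\<lambda>x. inv x) (rev ps') @ qs) \<subseteq> palindromes G S" using invs qs by auto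
    have "list_prod G (map (\<lambda>x. inv x) (rev ps') @ qs) = inv x \<otimes> (inv b \<otimes> x \<otimes> b)"
      using invs PC qsc ps'c qs(3) vb(2)
      by (subst list_prod_append) (auto simp: list_prod_inv x_def)
    also have "\<dots> = commutator G a b" using ca xc b by (simp add: commutator_def m_assoc)
    finally show "list_prod G (map (\<lambda>x. inv x) (rev ps') @ qs) = commutator G a b" .
  qed
qed

lemma pow_key:
  assumes h: "group_hom G H h" and H: "comm_group H" and x: "x \<in> carrier G"
  shows "distinct ys \<Longrightarrow> set ys \<subseteq> carrier G \<Longrightarrow> x \<in> set ys \<Longrightarrow>
    h (x [^] (d::int)) \<otimes>\<^bsub>H\<^esub> h (list_prod G (map (\<lambda>y. y [^] (f y :: int)) ys)) =
    h (list_prod G (map (\<lambda>y. y [^] ((f(x := f x + d)) y)) ys))"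
proof (induction ys)
  case Nil thus ?case by simp
next
  case (Cons y ys)
  interpret hh: group_hom G H h by fact
  interpret H: comm_group H by fact
  have ysc: "set ys \<subseteq> carrier G" "y \<in> carrier G" using Cons by auto
  have E1: "list_prod G (map (\<lambda>y. y [^] (f y :: int)) ys) \<in> carrier G"
    using ysc by (auto intro!: list_prod_closed simp: subset_iff)
  show ?case
  proof (cases "y = x")
    case True
    have "x \<notin> set ys" using Cons True by auto
    hence eq: "map (\<lambda>y. y [^] ((f(x := f x + d)) y)) ys = map (\<lambda>y. y [^] (f y)) ys"
      by (intro map_cong) auto
    have "x [^] (f x + d) = x [^] d \<otimes> x [^] f x" using x int_pow_mult[OF x, of d "f x"] by (simp add: add.commute)
    hence p: "x [^] (f x + d) = x [^] d \<otimes> (x [^] f x)" .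
    have "h (list_prod G (map (\<lambda>y. y [^] ((f(x := f x + d)) y)) (y # ys))) =
       h (x [^] (f x + d) \<otimes> list_prod G (map (\<lambda>y. y [^] (f y :: int)) ys))"
      by (simp only: list.map list_prod_Cons eq True fun_upd_same)
    also have "\<dots> = h (x [^] d \<otimes> (x [^] f x \<otimes> list_prod G (map (\<lambda>y. y [^] (f y :: int)) ys)))"
      using x E1 by (simp add: p m_assoc)
    also have "\<dots> = h (x [^] d) \<otimes>\<^bsub>H\<^esub> h (list_prod G (map (\<lambda>y. y [^] (f y :: int)) (y # ys)))"
      using x E1 True by simp
    finally show ?thesis by simp
  next
    case False
    hence IH: "h (x [^] d) \<otimes>\<^bsub>H\<^esub> h (list_prod G (map (\<lambda>y. y [^] (f y :: int)) ys)) =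
      h (list_prod G (map (\<lambda>y. y [^] ((f(x := f x + d)) y)) ys))" using Cons by auto
    have E2: "list_prod G (map (\<lambda>y. y [^] ((f(x := f x + d)) y)) ys) \<in> carrier G"
      using ysc by (auto intro!: list_prod_closed simp: subset_iff)
    show ?thesis using False ysc x E1 E2 IH[symmetric] by (simp add: comm_monoid.m_lcomm[OF comm_group.axioms(1)[OF H]])
  qed
qed

lemma list_prod_pow0: "set ys \<subseteq> carrier G \<Longrightarrow> list_prod G (map (\<lambda>y. y [^] (0::int)) ys) = \<one>"
  by (induction ys) auto

lemma abel_decomp:
  assumes S: "S \<subseteq> carrier G" and gen: "generate G S = carrier G"
    and xs: "set xs = S" "distinct xs" and g: "g \<in> carrier G"
  shows "\<exists>f. \<exists>d \<in> derived G (carrier G). g = d \<otimes> list_prod G (map (\<lambda>x. x [^] (f x :: int)) xs)"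
proof -
  define D where "D = derived G (carrier G)"
  interpret N: normal D G using derived_self_is_normal D_def by simp
  have hom: "group_hom G (G Mod D) (\<lambda>x. D #> x)"
    unfolding group_hom_def group_hom_axioms_def
    using is_group N.factorgroup_is_group N.r_coset_hom_Mod by auto
  interpret hh: group_hom G "G Mod D" "\<lambda>x. D #> x" by (rule hom)
  have cg: "comm_group (G Mod D)" using derived_quot_is_comm_group D_def by simp
  have xsc: "set xs \<subseteq> carrier G" using xs S by auto
  define E where "E = (\<lambda>f. list_prod G (map (\<lambda>x. x [^] (f x :: int)) xs))"
  have Ec: "E f \<in> carrier G" for f using xsc by (auto simp: E_def subset_iff intro!: list_prod_closed)
  have "word_over S v \<Longrightarrow> \<exists>f. D #> word_eval G v = D #> E f" for v
  proof (induction v)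
    case Nil thus ?case using list_prod_pow0[OF xsc] by (intro exI[of _ "\<lambda>_. 0"]) (simp add: E_def)
  next
    case (Cons l v)
    then obtain f where f: "D #> word_eval G v = D #> E f" by auto
    have lS: "fst l \<in> S" and ov: "word_over S v" using Cons by auto
    have lc: "fst l \<in> carrier G" using lS S by auto
    define d :: int where "d = (if snd l then 1 else -1)"
    have lett: "(if snd l then fst l else inv (fst l)) = fst l [^] d"
    proof (cases "snd l")
      case True thus ?thesis using lc by (simp add: d_def)
    next
      case False
      have "fst l [^] (- 1 :: int) = inv (fst l [^] (1::int))" by (rule int_pow_neg[OF lc])
      thus ?thesis using False lc by (simp add: d_def)
    qed
    have vc: "word_eval G v \<in> carrier G" using ov S word_eval_closed by auto
    have "D #> word_eval G (l # v) = (D #> (fst l [^] d)) \<otimes>\<^bsub>G Mod D\<^esub> (D #> word_eval G v)"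
      using lett vc lc by simp
    also have "\<dots> = (D #> (fst l [^] d)) \<otimes>\<^bsub>G Mod D\<^esub> (D #> E f)" using f by simp
    also have "\<dots> = D #> E (f(fst l := f (fst l) + d))"
      unfolding E_def by (rule pow_key[OF hom cg lc xs(2) xsc]) (use lS xs in auto)
    finally show ?case by blast
  qed
  moreover obtain v where "word_over S v" "word_eval G v = g" using gen_word[OF S] g gen by blast
  ultimately obtain f where f: "D #> g = D #> E f" by blast
  have "g \<in> D #> g" using rcos_self[OF g N.subgroup_axioms] .
  hence "g \<in> D #> E f" using f by simp
  then obtain d where "d \<in> D" "g = d \<otimes> E f" unfolding r_coset_def by auto
  thus ?thesis unfolding D_def E_def by blast
qed

end


theorem proposition2p8:
  fixes G (structure) and S :: "'a set" and n l k :: nat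
  assumes "group G"
    and "S \<subseteq> carrier G" and "finite S" and "card S = n"
    and "generate G S = carrier G"
    and "center G \<noteq> {\<one>}"
    and "comm_width G = enat l"
    and "pal_width (G Mod (center G)) ((\<lambda>x. center G #> x) ` S) = enat k"
  shows "pal_width G S \<le> enat (n + l * (2 * k + (if even k then 0 else 1)))"
proof -
  interpret group G by fact
  note S = assms(2) and gen = assms(5) and cw = assms(7) and pw = assms(8)
  obtain xs where xs: "set xs = S" "distinct xs" using finite_distinct_list[OF assms(3)] by blast
  have lxs: "length xs = n" using xs assms(4) distinct_card by fastforce
  define N where "N = 2 * k + (if even k then 0 else 1)"
  have NN: "k + k + (if odd k then 1 else 0) = N" by (simp add: N_def)
  have PC: "palindromes G S \<subseteq> carrier G" by (rule pal_carrier[OF S])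
  have "pal_length G S g \<le> n + l * N" if g: "g \<in> carrier G" for g
  proof -
    obtain f d where d: "d \<in> derived G (carrier G)"
      "g = d \<otimes> list_prod G (map (\<lambda>x. x [^] (f x :: int)) xs)"
      using abel_decomp[OF S gen xs g] by blast
    have ex: "\<exists>cs. set cs \<subseteq> carrier G \<times> carrier G \<and>
       list_prod G (map (\<lambda>(a, b). commutator G a b) cs) = d" by (rule derived_comms[OF d(1)])
    obtain cs where cs: "length cs = comm_length G d" "set cs \<subseteq> carrier G \<times> carrier G"
       "list_prod G (map (\<lambda>(a, b). commutator G a b) cs) = d"
      using LeastI_ex[of "\<lambda>m. \<exists>cs. length cs = m \<and> set cs \<subseteq> carrier G \<times> carrier G \<and>
       list_prod G (map (\<lambda>(a, b). commutator G a b) cs) = d"] ex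
      unfolding comm_length_def by blast
    have "enat (comm_length G d) \<le> comm_width G"
      unfolding comm_width_def by (rule SUP_upper[OF d(1)])
    hence csl: "length cs \<le> l" using cw cs(1) by simp
    have all: "\<forall>c \<in> set (map (\<lambda>(a, b). commutator G a b) cs).
       \<exists>qs. length qs = N \<and> set qs \<subseteq> palindromes G S \<and> list_prod G qs = c"
    proof
      fix c assume "c \<in> set (map (\<lambda>(a, b). commutator G a b) cs)"
      then obtain a b where ab: "(a, b) \<in> set cs" "c = commutator G a b" by auto
      have abc: "a \<in> carrier G" "b \<in> carrier G" using ab cs(2) by auto
      obtain qs where qs: "length qs = k + k + (if odd k then 1 else 0)"
         "set qs \<subseteq> palindromes G S" "list_prod G qs = commutator G a b"
        using comm_pal[OF S gen pw abc] by blast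
      show "\<exists>qs. length qs = N \<and> set qs \<subseteq> palindromes G S \<and> list_prod G qs = c"
        apply (rule exI[of _ qs])
        using qs NN ab(2) by simp
    qed
    obtain q1 where q1: "length q1 = N * length (map (\<lambda>(a, b). commutator G a b) cs)"
        "set q1 \<subseteq> palindromes G S"
      "list_prod G q1 = list_prod G (map (\<lambda>(a, b). commutator G a b) cs)"
      using concat_pals[OF PC all] by blast
    define q2 where "q2 = map (\<lambda>x. x [^] (f x :: int)) xs"
    have q2l: "length q2 = n" using lxs by (simp add: q2_def)
    have q2s: "set q2 \<subseteq> palindromes G S"
    proof
      fix p assume "p \<in> set q2"
      then obtain x where "x \<in> set xs" "p = x [^] (f x :: int)" unfolding q2_def by auto
      thus "p \<in> palindromes G S" using pal_pow[OF S, of x "f x"] xs(1) by simp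
    qed
    have c1: "set q1 \<subseteq> carrier G" using q1(2) PC by (rule order_trans)
    have c2: "set q2 \<subseteq> carrier G" using q2s PC by (rule order_trans)
    have "list_prod G (q1 @ q2) = list_prod G q1 \<otimes> list_prod G q2"
      by (rule list_prod_append[OF c1 c2])
    also have "\<dots> = g" using q1(3) cs(3) d(2) by (simp add: q2_def)
    finally have prodg: "list_prod G (q1 @ q2) = g" .
    have setq: "set (q1 @ q2) \<subseteq> palindromes G S" using q1(2) q2s by simp
    have "pal_length G S g \<le> length (q1 @ q2)"
      unfolding pal_length_def
      by (rule Least_le) (rule exI[of _ "q1 @ q2"], use prodg setq in simp)
    also have "\<dots> = N * length cs + n" using q1(1) q2l by simp
    also have "\<dots> \<le> n + l * N" using csl by (simp add: mult.commute)
    finally show ?thesis .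
  qed
  hence "\<And>g. g \<in> carrier G \<Longrightarrow> enat (pal_length G S g) \<le> enat (n + l * N)" by simp
  hence "pal_width G S \<le> enat (n + l * N)" unfolding pal_width_def by (rule SUP_least)
  thus ?thesis unfolding N_def .
qed

end
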